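(* Fix $d,m\geq1$ and smooth vector fields $f^0,\dots,f^m$ on $\mathbb{R}^d$. For all exotic forests $\pi_d$, $\hat\pi_{\hat d}$ and all $\phi\in\mathcal{C}^\infty_P(\mathbb{R}^d)$, \[ F^{\mathrm{exo}}(\pi_d)\big[F^{\mathrm{exo}}(\hat\pi_{\hat d})[\phi]\big]=F^{\mathrm{exo}}(\pi_d\diamond\hat\pi_{\hat d})[\phi], \] where $F^{\mathrm{exo}}$ is extended linearly.
   Context: A forest $\pi=(V,E)$: finite node set, directed edges $(v,w)$ ($v$ a predecessor of $w$), each node with at most one outgoing edge, each connected component with exactly one root (node without outgoing edge); $\mathbf{1}$ is the empty forest. A decoration $d:V\to\mathbb{N}$ has $|d^{-1}(n)|\in\{0,2\}$ for $n>0$ in the exotic case (a pair of nodes with the same nonzero decoration is a liana); exotic forests are equivalence classes of such decorated graphs under edge-preserving node bijections that map decorations to decorations differing only by a relabelling of nonzero values (bijection of $\mathbb{N}$ fixing $0$). $F^{\mathrm{exo}}(\pi_d)[\phi](x)=\sum_{i_w\in\{1,\dots,d\},\,w\in V}\sum_{p_n\in\{1,\dots,m\},\,n\in d(V)\setminus\{0\}}\phi_{I_R}(x)\prod_{v\in V}f^{p_{d(v)},i_v}_{I_{\Pi(v)}}(x)$ with $p_0=0$, $R$ the roots, $\Pi(v)$ the predecessors of $v$, $\phi_{I_S}$ the partial derivative of $\phi$ in the indices $i_w,w\in S$, $f^{p,i}_{j_1\dots j_k}$ partial derivatives of the $i$-th component of $f^p$; $F^{\mathrm{exo}}(\mathbf{1})[\phi]=\phi$.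 The Grossman–Larson product $\pi_d\diamond\hat\pi_{\hat d}$ is the sum, over all maps $g$ from the set of roots of $\pi$ to $\hat V\cup\{\ast\}$, of the forest on $V\sqcup\hat V$ with edges $E\cup\hat E\cup\{(r,g(r)):g(r)\neq\ast\}$ and decoration equal to $d$ on $V$ and $\hat d$ on $\hat V$ after relabelling so that nonzero decorations of $\pi$ and $\hat\pi$ are distinct. $\mathcal{C}^\infty_P(\mathbb{R}^d)$: smooth functions with all derivatives polynomially bounded. *)

theory Defs
  imports "HOL-Analysis.Analysis"
begin

definition partial :: "'d::finite \<Rightarrow> (real^'d \<Rightarrow> real) \<Rightarrow> real^'d \<Rightarrow> real" where
  "partial i g x = deriv (\<lambda>t. g (x + t *\<^sub>R axis i 1)) 0"

fun partials :: "(real^'d::finite \<Rightarrow> real) \<Rightarrow> 'd list \<Rightarrow> real^'d \<Rightarrow> real" where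
  "partials g [] = g"
| "partials g (i # is) = partial i (partials g is)"

text \<open>Partial derivative in a multiset of directions (order irrelevant for smooth g).\<close>
definition pdm :: "(real^'d::finite \<Rightarrow> real) \<Rightarrow> 'd multiset \<Rightarrow> real^'d \<Rightarrow> real" where
  "pdm g M = partials g (SOME xs. mset xs = M)"

definition smooth :: "(real^'d::finite \<Rightarrow> real) \<Rightarrow> bool" where
  "smooth g \<longleftrightarrow> (\<forall>is. partials g is differentiable_on UNIV)"

definition smooth_poly :: "(real^'d::finite \<Rightarrow> real) \<Rightarrow> bool" where
  "smooth_poly g \<longleftrightarrow> smooth g \<and>
     (\<forall>is. \<exists>C (k::nat). \<forall>x. \<bar>partials g is x\<bar> \<le> C * (1 + norm x) ^ k)"

record 'a forest =
  nodes  :: "'a set"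
  parent :: "'a \<Rightarrow> 'a option"   \<comment> \<open>target of the unique outgoing edge, if any\<close>
  deco   :: "'a \<Rightarrow> nat"

definition edges :: "'a forest \<Rightarrow> ('a \<times> 'a) set" where
  "edges \<pi> = {(v, w). v \<in> nodes \<pi> \<and> parent \<pi> v = Some w}"

definition roots :: "'a forest \<Rightarrow> 'a set" where
  "roots \<pi> = {v \<in> nodes \<pi>. parent \<pi> v = None}"

definition preds :: "'a forest \<Rightarrow> 'a \<Rightarrow> 'a set" where
  "preds \<pi> v = {u \<in> nodes \<pi>. parent \<pi> u = Some v}"

text \<open>A finite forest: each node has at most one outgoing edge (built in), edges stay in
  the node set, and there are no cycles (so each component has exactly one root).\<close>
definition forest :: "'a forest \<Rightarrow> bool" where
  "forest \<pi> \<longleftrightarrow> finite (nodes \<pi>)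
     \<and> (\<forall>v w. parent \<pi> v = Some w \<longrightarrow> v \<in> nodes \<pi> \<and> w \<in> nodes \<pi>)
     \<and> acyclic (edges \<pi>)"

definition exotic_forest :: "'a forest \<Rightarrow> bool" where
  "exotic_forest \<pi> \<longleftrightarrow> forest \<pi> \<and>
     (\<forall>n>0. card {v \<in> nodes \<pi>. deco \<pi> v = n} \<in> {0, 2})"

definition lianas :: "'a forest \<Rightarrow> nat set" where
  "lianas \<pi> = deco \<pi> ` nodes \<pi> - {0}"

text \<open>f p is the vector field f^p; its i-th component is (\<lambda>x. f p x $ i).\<close>
definition Fexo :: "(nat \<Rightarrow> real^'d \<Rightarrow> real^'d) \<Rightarrow> nat \<Rightarrow> 'a forest
                    \<Rightarrow> (real^'d::finite \<Rightarrow> real) \<Rightarrow> real^'d \<Rightarrow> real" where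
  "Fexo f m \<pi> \<phi> x =
    (\<Sum>i \<in> nodes \<pi> \<rightarrow>\<^sub>E (UNIV :: 'd set).
      \<Sum>p \<in> lianas \<pi> \<rightarrow>\<^sub>E {1..m}.
        pdm \<phi> (image_mset i (mset_set (roots \<pi>))) x *
        (\<Prod>v \<in> nodes \<pi>.
           pdm (\<lambda>y. f (if deco \<pi> v = 0 then 0 else p (deco \<pi> v)) y $ i v)
               (image_mset i (mset_set (preds \<pi> v))) x))"

text \<open>Grafting maps: each root of \<pi> goes to a node of \<pi>' (Some w) or to * (None).\<close>
definition GL_maps :: "'a forest \<Rightarrow> 'b forest \<Rightarrow> ('a \<Rightarrow> 'b option) set" where
  "GL_maps \<pi> \<pi>' = roots \<pi> \<rightarrow>\<^sub>E insert None (Some ` nodes \<pi>')"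

text \<open>The forest on the disjoint union; nonzero decorations are relabelled injectively
  (evens for \<pi>, odds for \<pi>') so that those of \<pi> and \<pi>' are distinct.\<close>
definition graft :: "'a forest \<Rightarrow> 'b forest \<Rightarrow> ('a \<Rightarrow> 'b option) \<Rightarrow> ('a + 'b) forest" where
  "graft \<pi> \<pi>' g =
    \<lparr> nodes = nodes \<pi> <+> nodes \<pi>',
      parent = (\<lambda>u. case u of
                  Inl v \<Rightarrow> (if v \<in> nodes \<pi> then
                              (case parent \<pi> v of Some w \<Rightarrow> Some (Inl w)
                                                | None \<Rightarrow> map_option Inr (g v))
                            else None)
                | Inr w \<Rightarrow> map_option Inr (parent \<pi>' w)),
      deco = (\<lambda>u. case u of
                  Inl v \<Rightarrow> (if deco \<pi> v = 0 then 0 else 2 * deco \<pi> v)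
                | Inr w \<Rightarrow> (if deco \<pi>' w = 0 then 0 else 2 * deco \<pi>' w + 1)) \<rparr>"

end

theory Submission
  imports Defs
begin


lemma partial_has:
  fixes g :: "real^'d::finite \<Rightarrow> real"
  assumes "(g has_derivative g') (at x)"
  shows "((\<lambda>t. g (x + t *\<^sub>R axis i 1)) has_real_derivative g' (axis i 1)) (at 0)"
proof -
  have 1: "((\<lambda>t. x + t *\<^sub>R axis i 1) has_derivative (\<lambda>t. t *\<^sub>R axis i 1)) (at (0::real))"
    by (auto intro!: derivative_eq_intros)
  have 2: "(g has_derivative g') (at (x + (0::real) *\<^sub>R axis i 1))" using assms by simp
  have "((\<lambda>t. g (x + t *\<^sub>R axis i 1)) has_derivative (\<lambda>t. g' (t *\<^sub>R axis i 1))) (at 0)"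
    using has_derivative_compose[OF 1 2] by simp
  moreover have "linear g'" using assms has_derivative_linear by blast
  then have "(\<lambda>t. g' (t *\<^sub>R axis i 1)) = (\<lambda>t. g' (axis i 1) * t)"
    by (auto simp: linear_cmul)
  ultimately show ?thesis by (simp add: has_field_derivative_def)
qed

lemma partial_eq:
  fixes g :: "real^'d::finite \<Rightarrow> real"
  assumes "(g has_derivative g') (at x)"
  shows "partial i g x = g' (axis i 1)"
  unfolding partial_def using partial_has[OF assms] DERIV_imp_deriv by blast

lemma partial_at_shift:
  fixes g :: "real^'d::finite \<Rightarrow> real"
  assumes "g differentiable (at (y + s *\<^sub>R axis i 1))"
  shows "((\<lambda>t. g (y + t *\<^sub>R axis i 1)) has_real_derivative partial i g (y + s *\<^sub>R axis i 1)) (at s)"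
proof -
  define z where "z = y + s *\<^sub>R axis i 1"
  obtain g' where g': "(g has_derivative g') (at z)" using assms unfolding z_def differentiable_def by blast
  have "((\<lambda>t. g (z + t *\<^sub>R axis i 1)) has_real_derivative partial i g z) (at 0)"
    using partial_has[OF g'] partial_eq[OF g'] by simp
  moreover have "(\<lambda>t. g (z + t *\<^sub>R axis i 1)) = (\<lambda>t. (\<lambda>t. g (y + t *\<^sub>R axis i 1)) (t + s))"
    by (auto simp: z_def algebra_simps)
  ultimately have "((\<lambda>t. (\<lambda>t. g (y + t *\<^sub>R axis i 1)) (t + s)) has_real_derivative partial i g z) (at 0)"
    by simp
  then have "((\<lambda>t. g (y + t *\<^sub>R axis i 1)) has_real_derivative partial i g z) (at (0 + s))"
    using DERIV_shift by blast
  then show ?thesis by (simp add: z_def)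
qed

lemma smooth_diff: "smooth g \<Longrightarrow> partials g is differentiable (at z)"
  unfolding smooth_def by (meson UNIV_I differentiable_on_def at_within_open open_UNIV)

lemma smooth_diff0: "smooth g \<Longrightarrow> g differentiable (at z)"
  using smooth_diff[of g "[]"] by simp

lemma mixed_mvt:
  fixes h :: "real^'d::finite \<Rightarrow> real"
  assumes sm: "smooth h" and t: "t > 0"
  shows "\<exists>\<xi> \<eta>. 0 < \<xi> \<and> \<xi> < t \<and> 0 < \<eta> \<and> \<eta> < t \<and>
    h (x + t *\<^sub>R axis a 1 + t *\<^sub>R axis b 1) - h (x + t *\<^sub>R axis a 1) - h (x + t *\<^sub>R axis b 1) + h x
     = t * t * partial b (partial a h) (x + \<xi> *\<^sub>R axis a 1 + \<eta> *\<^sub>R axis b 1)"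
proof -
  define ea where "ea = axis a (1::real)"
  define eb where "eb = axis b (1::real)"
  define \<phi> where "\<phi> s = h (x + t *\<^sub>R eb + s *\<^sub>R ea) - h (x + s *\<^sub>R ea)" for s
  have d\<phi>: "(\<phi> has_real_derivative (partial a h (x + t *\<^sub>R eb + s *\<^sub>R ea) - partial a h (x + s *\<^sub>R ea))) (at s)" for s
    unfolding \<phi>_def ea_def
    by (intro DERIV_diff partial_at_shift smooth_diff0[OF sm])
  obtain \<xi> where \<xi>: "0 < \<xi>" "\<xi> < t" "\<phi> t - \<phi> 0 = (t - 0) * (partial a h (x + t *\<^sub>R eb + \<xi> *\<^sub>R ea) - partial a h (x + \<xi> *\<^sub>R ea))"
    using MVT2[OF t, of \<phi>, OF d\<phi>] by blast
  define \<psi> where "\<psi> s = partial a h (x + \<xi> *\<^sub>R ea + s *\<^sub>R eb)" for s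
  have pa: "partial a h = partials h [a]" by simp
  have d\<psi>: "(\<psi> has_real_derivative (partial b (partial a h) (x + \<xi> *\<^sub>R ea + s *\<^sub>R eb))) (at s)" for s
    unfolding \<psi>_def eb_def pa
    by (intro partial_at_shift smooth_diff[OF sm])
  obtain \<eta> where \<eta>: "0 < \<eta>" "\<eta> < t" "\<psi> t - \<psi> 0 = (t - 0) * partial b (partial a h) (x + \<xi> *\<^sub>R ea + \<eta> *\<^sub>R eb)"
    using MVT2[OF t, of \<psi>, OF d\<psi>] by blast
  have "\<psi> t - \<psi> 0 = partial a h (x + t *\<^sub>R eb + \<xi> *\<^sub>R ea) - partial a h (x + \<xi> *\<^sub>R ea)"
    unfolding \<psi>_def by (simp add: algebra_simps)
  then have e1: "\<phi> t - \<phi> 0 = t * (t * partial b (partial a h) (x + \<xi> *\<^sub>R ea + \<eta> *\<^sub>R eb))"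
    using \<xi>(3) \<eta>(3) by simp
  have "\<phi> t - \<phi> 0 = h (x + t *\<^sub>R ea + t *\<^sub>R eb) - h (x + t *\<^sub>R ea) - h (x + t *\<^sub>R eb) + h x"
    unfolding \<phi>_def by (simp add: algebra_simps)
  then have "h (x + t *\<^sub>R ea + t *\<^sub>R eb) - h (x + t *\<^sub>R ea) - h (x + t *\<^sub>R eb) + h x
     = t * t * partial b (partial a h) (x + \<xi> *\<^sub>R ea + \<eta> *\<^sub>R eb)"
    using e1 by simp
  then show ?thesis using \<xi> \<eta> unfolding ea_def eb_def by blast
qed

lemma aux_abs: "(ay::real) = by \<Longrightarrow> \<bar>ay - ax\<bar> < \<bar>ax - bx\<bar>/2 \<Longrightarrow> \<bar>by - bx\<bar> < \<bar>ax - bx\<bar>/2 \<Longrightarrow> False"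
  by (simp add: abs_if split: if_splits)

lemma schwarz:
  fixes h :: "real^'d::finite \<Rightarrow> real"
  assumes sm: "smooth h"
  shows "partial a (partial b h) = partial b (partial a h)"
proof
  fix x
  define A where "A = partial b (partial a h)"
  define B where "B = partial a (partial b h)"
  have cA: "isCont A x" unfolding A_def using smooth_diff[OF sm, of "[b,a]" x]
    by (simp add: differentiable_imp_continuous_within)
  have cB: "isCont B x" unfolding B_def using smooth_diff[OF sm, of "[a,b]" x]
    by (simp add: differentiable_imp_continuous_within)
  show "B x = A x"
  proof (rule ccontr)
    assume ne: "B x \<noteq> A x"
    define e where "e = \<bar>A x - B x\<bar> / 2"
    have e: "e > 0" using ne by (simp add: e_def)
    obtain d1 where d1: "d1 > 0" "\<And>y. dist y x < d1 \<Longrightarrow> dist (A y) (A x) < e"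
      using cA e unfolding continuous_at_eps_delta by blast
    obtain d2 where d2: "d2 > 0" "\<And>y. dist y x < d2 \<Longrightarrow> dist (B y) (B x) < e"
      using cB e unfolding continuous_at_eps_delta by blast
    define t where "t = min d1 d2 / 4"
    have t: "t > 0" using d1 d2 by (simp add: t_def)
    obtain \<xi> \<eta> where 1: "0 < \<xi>" "\<xi> < t" "0 < \<eta>" "\<eta> < t"
      "h (x + t *\<^sub>R axis a 1 + t *\<^sub>R axis b 1) - h (x + t *\<^sub>R axis a 1) - h (x + t *\<^sub>R axis b 1) + h x
     = t * t * A (x + \<xi> *\<^sub>R axis a 1 + \<eta> *\<^sub>R axis b 1)"
      using mixed_mvt[OF sm t, of x a b] unfolding A_def by blast
    obtain \<xi>' \<eta>' where 2: "0 < \<xi>'" "\<xi>' < t" "0 < \<eta>'" "\<eta>' < t"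
      "h (x + t *\<^sub>R axis b 1 + t *\<^sub>R axis a 1) - h (x + t *\<^sub>R axis b 1) - h (x + t *\<^sub>R axis a 1) + h x
     = t * t * B (x + \<xi>' *\<^sub>R axis b 1 + \<eta>' *\<^sub>R axis a 1)"
      using mixed_mvt[OF sm t, of x b a] unfolding B_def by blast
    have "x + t *\<^sub>R axis b 1 + t *\<^sub>R axis a 1 = x + t *\<^sub>R axis a 1 + t *\<^sub>R axis b 1"
      by (simp add: algebra_simps)
    then have "t * t * A (x + \<xi> *\<^sub>R axis a 1 + \<eta> *\<^sub>R axis b 1) = t * t * B (x + \<xi>' *\<^sub>R axis b 1 + \<eta>' *\<^sub>R axis a 1)"
      using 1(5) 2(5) by (simp add: algebra_simps)
    then have eq: "A (x + \<xi> *\<^sub>R axis a 1 + \<eta> *\<^sub>R axis b 1) = B (x + \<xi>' *\<^sub>R axis b 1 + \<eta>' *\<^sub>R axis a 1)"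
      using t by simp
    have nrm: "dist (x + u *\<^sub>R axis c 1 + v *\<^sub>R axis c' 1) x < min d1 d2"
      if "0 < u" "u < t" "0 < v" "v < t" for u v c c'
    proof -
      have "dist (x + u *\<^sub>R axis c 1 + v *\<^sub>R axis c' 1) x = norm (u *\<^sub>R axis c (1::real) + v *\<^sub>R axis c' 1)"
        by (simp add: dist_norm)
      also have "\<dots> \<le> norm (u *\<^sub>R axis c (1::real)) + norm (v *\<^sub>R axis c' (1::real))"
        by (rule norm_triangle_ineq)
      also have "\<dots> = u + v" using that by (simp add: norm_axis_1)
      also have "\<dots> < min d1 d2" using that t_def d1 d2 by simp
      finally show ?thesis .
    qed
    have "dist (A (x + \<xi> *\<^sub>R axis a 1 + \<eta> *\<^sub>R axis b 1)) (A x) < e"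
      using d1(2) nrm[OF 1(1-4)] by simp
    moreover have "dist (B (x + \<xi>' *\<^sub>R axis b 1 + \<eta>' *\<^sub>R axis a 1)) (B x) < e"
      using d2(2) nrm[OF 2(1-4)] by simp
    ultimately show False using eq aux_abs unfolding e_def dist_real_def by metis
  qed
qed



lemma partials_append: "partials g (xs @ ys) = partials (partials g ys) xs"
  by (induction xs) auto

lemma smooth_partials: "smooth g \<Longrightarrow> smooth (partials g xs)"
  unfolding smooth_def by (metis partials_append)

lemma smooth_partial: "smooth g \<Longrightarrow> smooth (partial i g)"
  using smooth_partials[of g "[i]"] by simp

lemma partials_move:
  assumes "smooth g"
  shows "partials g (us @ a # vs) = partials g (a # us @ vs)"
proof (induction us)
  case Nil then show ?case by simp
next
  case (Cons u us)
  have "partials g ((u # us) @ a # vs) = partial u (partial a (partials g (us @ vs)))"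
    using Cons by simp
  also have "\<dots> = partial a (partial u (partials g (us @ vs)))"
    using schwarz[OF smooth_partials[OF assms]] by metis
  finally show ?case by simp
qed

lemma partials_perm:
  assumes "smooth g"
  shows "mset xs = mset ys \<Longrightarrow> partials g xs = partials g ys"
proof (induction xs arbitrary: ys)
  case Nil then show ?case by simp
next
  case (Cons a xs)
  then have "a \<in> set ys" by (metis list.set_intros(1) set_mset_mset)
  then obtain us vs where ys: "ys = us @ a # vs" by (meson split_list)
  then have "mset xs = mset (us @ vs)" using Cons.prems by simp
  then have "partials g xs = partials g (us @ vs)" using Cons.IH by blast
  then show ?case using partials_move[OF assms] ys by simp
qed

lemma pdm_mset: "smooth g \<Longrightarrow> pdm g (mset xs) = partials g xs"
  unfolding pdm_def by (rule partials_perm) (auto intro: someI_ex ex_mset)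

lemma pdm_empty[simp]: "pdm g {#} = g"
  unfolding pdm_def by simp

lemma smooth_pdm: "smooth g \<Longrightarrow> smooth (pdm g M)"
  unfolding pdm_def by (rule smooth_partials)

lemma pdm_add:
  assumes "smooth g"
  shows "pdm g (M + N) = pdm (pdm g N) M"
proof -
  obtain xs ys where M: "M = mset xs" and N: "N = mset ys" by (metis ex_mset)
  have "pdm g (M + N) = partials g (xs @ ys)" using pdm_mset[OF assms, of "xs @ ys"] M N by simp
  also have "\<dots> = partials (partials g ys) xs" by (rule partials_append)
  also have "\<dots> = pdm (pdm g N) M"
    using pdm_mset[OF assms, of ys] pdm_mset[OF smooth_partials[OF assms, where xs=ys], where xs=xs] M N by simp
  finally show ?thesis .
qed

lemma pdm_add_mset:
  assumes "smooth g"
  shows "pdm g (add_mset a M) = partial a (pdm g M)"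
proof -
  have "pdm g (add_mset a M) = pdm (pdm g M) {#a#}" using pdm_add[OF assms, of "{#a#}" M] by simp
  also have "\<dots> = partial a (pdm g M)" using pdm_mset[OF smooth_pdm[OF assms], where xs="[a]"] by simp
  finally show ?thesis .
qed



lemma diff_on_UNIV: "f differentiable_on UNIV \<longleftrightarrow> (\<forall>z. f differentiable (at z))"
  unfolding differentiable_on_def by simp

lemma smooth_iff: "smooth g \<longleftrightarrow> (\<forall>is z. partials g is differentiable (at z))"
  unfolding smooth_def diff_on_UNIV by blast

lemma partial_sum:
  fixes F :: "'a \<Rightarrow> real^'d::finite \<Rightarrow> real"
  assumes "\<forall>a\<in>A. F a differentiable (at x)"
  shows "partial i (\<lambda>y. \<Sum>a\<in>A. F a y) x = (\<Sum>a\<in>A. partial i (F a) x)"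
proof -
  obtain D where D: "\<forall>a\<in>A. (F a has_derivative D a) (at x)"
    using assms unfolding differentiable_def by (metis bchoice)
  have "((\<lambda>y. \<Sum>a\<in>A. F a y) has_derivative (\<lambda>h. \<Sum>a\<in>A. D a h)) (at x)"
    using D by (intro has_derivative_sum) auto
  note 1 = partial_eq[OF this, of i]
  have "\<forall>a\<in>A. partial i (F a) x = D a (axis i 1)"
  proof
    fix a assume "a \<in> A" then show "partial i (F a) x = D a (axis i 1)" using D by (intro partial_eq) auto
  qed
  then show ?thesis unfolding 1 by (intro sum.cong) auto
qed

lemma partial_add:
  fixes g h :: "real^'d::finite \<Rightarrow> real"
  assumes "g differentiable (at x)" "h differentiable (at x)"
  shows "partial i (\<lambda>y. g y + h y) x = partial i g x + partial i h x"
proof -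
  obtain D E where D: "(g has_derivative D) (at x)" "(h has_derivative E) (at x)"
    using assms unfolding differentiable_def by (metis bchoice)
  have "((\<lambda>y. g y + h y) has_derivative (\<lambda>v. D v + E v)) (at x)"
    using D by (intro has_derivative_add) auto
  note 1 = partial_eq[OF this, of i]
  show ?thesis unfolding 1 partial_eq[OF D(1), of i] partial_eq[OF D(2), of i] by simp
qed

lemma partial_mult:
  fixes g h :: "real^'d::finite \<Rightarrow> real"
  assumes "g differentiable (at x)" "h differentiable (at x)"
  shows "partial i (\<lambda>y. g y * h y) x = partial i g x * h x + g x * partial i h x"
proof -
  obtain D E where D: "(g has_derivative D) (at x)" "(h has_derivative E) (at x)"
    using assms unfolding differentiable_def by (metis bchoice)
  have "((\<lambda>y. g y * h y) has_derivative (\<lambda>v. g x * E v + D v * h x)) (at x)"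
    using D by (intro has_derivative_mult) auto
  note 1 = partial_eq[OF this, of i]
  show ?thesis unfolding 1 partial_eq[OF D(1), of i] partial_eq[OF D(2), of i] by simp
qed

lemma partial_prod:
  fixes F :: "'a \<Rightarrow> real^'d::finite \<Rightarrow> real"
  assumes "\<forall>a\<in>A. F a differentiable (at x)"
  shows "partial i (\<lambda>y. \<Prod>a\<in>A. F a y) x = (\<Sum>a\<in>A. partial i (F a) x * (\<Prod>j\<in>A-{a}. F j x))"
proof -
  obtain D where D: "\<forall>a\<in>A. (F a has_derivative D a) (at x)"
    using assms unfolding differentiable_def by (metis bchoice)
  have "((\<lambda>y. \<Prod>a\<in>A. F a y) has_derivative (\<lambda>h. \<Sum>a\<in>A. D a h * (\<Prod>j\<in>A-{a}. F j x))) (at x)"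
    using D by (intro has_derivative_prod) auto
  note 1 = partial_eq[OF this, of i]
  have "\<forall>a\<in>A. partial i (F a) x = D a (axis i 1)"
  proof
    fix a assume "a \<in> A" then show "partial i (F a) x = D a (axis i 1)" using D by (intro partial_eq) auto
  qed
  then show ?thesis unfolding 1 by (intro sum.cong) auto
qed

lemma partial_const: "partial i (\<lambda>y. c) x = 0"
  unfolding partial_def by simp

lemma partials_const: "partials (\<lambda>y. c) is = (\<lambda>y. if is = [] then c else 0)"
  by (induction "is") (auto simp: partial_const)

lemma smooth_const: "smooth (\<lambda>y. c)"
  unfolding smooth_iff partials_const by auto

lemma partials_sum:
  fixes F :: "'a \<Rightarrow> real^'d::finite \<Rightarrow> real"
  assumes "\<forall>a\<in>A. smooth (F a)"
  shows "partials (\<lambda>y. \<Sum>a\<in>A. F a y) is = (\<lambda>y. \<Sum>a\<in>A. partials (F a) is y)"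
proof (induction "is")
  case Nil then show ?case by simp
next
  case (Cons i "is")
  show ?case using assms by (auto simp: Cons partial_sum smooth_diff)
qed

lemma smooth_sum:
  fixes F :: "'a \<Rightarrow> real^'d::finite \<Rightarrow> real"
  assumes "\<forall>a\<in>A. smooth (F a)"
  shows "smooth (\<lambda>y. \<Sum>a\<in>A. F a y)"
proof (cases "finite A")
  case True
  then show ?thesis unfolding smooth_iff partials_sum[OF assms]
    using assms by (auto intro!: differentiable_sum smooth_diff)
next
  case False
  then show ?thesis using smooth_const[of 0] by simp
qed

lemma pdm_sum:
  fixes F :: "'a \<Rightarrow> real^'d::finite \<Rightarrow> real"
  assumes "\<forall>a\<in>A. smooth (F a)"
  shows "pdm (\<lambda>y. \<Sum>a\<in>A. F a y) M = (\<lambda>y. \<Sum>a\<in>A. pdm (F a) M y)"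
  unfolding pdm_def using partials_sum[OF assms] by simp

definition smn :: "nat \<Rightarrow> (real^'d::finite \<Rightarrow> real) \<Rightarrow> bool" where
  "smn n g \<longleftrightarrow> (\<forall>is z. length is \<le> n \<longrightarrow> partials g is differentiable (at z))"

lemma partials_add_n:
  assumes "smn n g" "smn n h"
  shows "length is \<le> Suc n \<Longrightarrow> partials (\<lambda>y. g y + h y) is = (\<lambda>y. partials g is y + partials h is y)"
proof (induction "is")
  case Nil then show ?case by simp
next
  case (Cons i "is")
  then have l: "length is \<le> n" by simp
  show ?case using Cons l assms unfolding smn_def by (auto simp: partial_add)
qed

lemma smnD: "smn n g \<Longrightarrow> length is \<le> n \<Longrightarrow> partials g is differentiable (at z)"
  unfolding smn_def by blast

lemma smnI: "(\<And>is z. length is \<le> n \<Longrightarrow> partials g is differentiable (at z)) \<Longrightarrow> smn n g"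
  unfolding smn_def by blast

lemma smn_add: fixes g h :: "real^'d::finite \<Rightarrow> real" shows "smn n g \<Longrightarrow> smn n h \<Longrightarrow> smn n (\<lambda>y. g y + h y)"
proof (rule smnI)
  fix "is" :: "'d list" and z assume a: "smn n g" "smn n h" and l: "length is \<le> n"
  have "partials (\<lambda>y. g y + h y) is = (\<lambda>y. partials g is y + partials h is y)"
    using partials_add_n[OF a] l by simp
  then show "partials (\<lambda>y. g y + h y) is differentiable (at z)"
    using smnD[OF a(1) l] smnD[OF a(2) l] by simp
qed

lemma smn_mult: fixes g h :: "real^'d::finite \<Rightarrow> real" shows "smn n g \<Longrightarrow> smn n h \<Longrightarrow> smn n (\<lambda>y. g y * h y)"
proof (induction n arbitrary: g h)
  case 0
  show ?case
  proof (rule smnI)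
    fix "is" :: "'d list" and z assume "length is \<le> 0"
    then have "is = []" by simp
    then show "partials (\<lambda>y. g y * h y) is differentiable (at z)"
      using smnD[OF "0.prems"(1), of "[]"] smnD[OF "0.prems"(2), of "[]"] by simp
  qed
next
  case (Suc n)
  have dg: "g differentiable (at z)" "h differentiable (at z)" for z
    using smnD[OF Suc.prems(1), of "[]"] smnD[OF Suc.prems(2), of "[]"] by simp_all
  have pig: "smn n (partial i g)" "smn n (partial i h)" for i
  proof -
    show "smn n (partial i g)"
    proof (rule smnI)
      fix "is" :: "'d list" and z assume l: "length is \<le> n"
      have "partials (partial i g) is = partials g (is @ [i])" by (simp add: partials_append)
      then show "partials (partial i g) is differentiable (at z)"
        using smnD[OF Suc.prems(1), of "is @ [i]"] l by simp
    qed
    show "smn n (partial i h)"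
    proof (rule smnI)
      fix "is" :: "'d list" and z assume l: "length is \<le> n"
      have "partials (partial i h) is = partials h (is @ [i])" by (simp add: partials_append)
      then show "partials (partial i h) is differentiable (at z)"
        using smnD[OF Suc.prems(2), of "is @ [i]"] l by simp
    qed
  qed
  have sh: "smn n g" "smn n h"
    using smnD[OF Suc.prems(1)] smnD[OF Suc.prems(2)] by (auto intro!: smnI)
  have P: "partial i (\<lambda>y. g y * h y) = (\<lambda>y. partial i g y * h y + g y * partial i h y)" for i
    using dg by (auto simp: partial_mult)
  have S: "smn n (partial i (\<lambda>y. g y * h y))" for i
    unfolding P by (intro smn_add Suc.IH pig sh)
  show ?case
  proof (rule smnI)
    fix "is" :: "'d list" and z assume l: "length is \<le> Suc n"
    show "partials (\<lambda>y. g y * h y) is differentiable (at z)"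
    proof (cases "is" rule: rev_cases)
      case Nil then show ?thesis using dg by simp
    next
      case (snoc js i)
      then have jl: "length js \<le> n" using l by simp
      have "partials (\<lambda>y. g y * h y) is = partials (partial i (\<lambda>y. g y * h y)) js"
        using snoc by (simp add: partials_append)
      then show ?thesis using smnD[OF S[of i] jl, of z] by simp
    qed
  qed
qed

lemma smooth_smn: "smooth g \<longleftrightarrow> (\<forall>n. smn n g)"
proof
  assume "smooth g" then show "\<forall>n. smn n g" unfolding smn_def using smooth_diff by metis
next
  assume a: "\<forall>n. smn n g"
  show "smooth g" unfolding smooth_iff
  proof (intro allI)
    fix "is" z show "partials g is differentiable (at z)"
      using smnD[OF a[rule_format, of "length is"], of "is"] by simp
  qed
qed

lemma smooth_mult: "smooth g \<Longrightarrow> smooth h \<Longrightarrow> smooth (\<lambda>y. g y * h y)"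
proof -
  assume "smooth g" "smooth h"
  then have "smn n g" "smn n h" for n by (simp_all add: smooth_smn)
  then have "smn n (\<lambda>y. g y * h y)" for n by (rule smn_mult)
  then show ?thesis by (simp add: smooth_smn)
qed

lemma smooth_prod:
  fixes F :: "'a \<Rightarrow> real^'d::finite \<Rightarrow> real"
  assumes "\<forall>a\<in>A. smooth (F a)"
  shows "smooth (\<lambda>y. \<Prod>a\<in>A. F a y)"
proof (cases "finite A")
  case True
  then show ?thesis using assms
  proof (induction A rule: finite_induct)
    case empty then show ?case using smooth_const[of 1] by simp
  next
    case (insert a A)
    have "(\<lambda>y. \<Prod>a\<in>insert a A. F a y) = (\<lambda>y. F a y * (\<Prod>a\<in>A. F a y))"
      using insert.hyps by simp
    moreover have "smooth (\<lambda>y. F a y * (\<Prod>a\<in>A. F a y))"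
      using insert by (intro smooth_mult) auto
    ultimately show ?case by simp
  qed
next
  case False
  then show ?thesis using smooth_const[of 1] by simp
qed



lemma t1: assumes "a \<notin> R" "p \<in> S \<times> (R \<rightarrow>\<^sub>E S)"
  shows "(fst p, (snd p)(a := undefined)) = p"
proof -
  have g: "snd p \<in> R \<rightarrow>\<^sub>E S" using assms(2) by (simp add: mem_Times_iff)
  have "snd p a = undefined" by (rule PiE_arb[OF g assms(1)])
  then have "(snd p)(a := undefined) = snd p" by (rule fun_upd_idem)
  then show ?thesis by simp
qed

lemma t2: "p \<in> S \<times> (R \<rightarrow>\<^sub>E S) \<Longrightarrow> (snd p)(a := fst p) \<in> insert a R \<rightarrow>\<^sub>E S"
  by (cases p) (simp add: PiE_fun_upd)

lemma t3: "a \<notin> R \<Longrightarrow> g \<in> insert a R \<rightarrow>\<^sub>E S \<Longrightarrow> (g a, g(a := undefined)) \<in> S \<times> (R \<rightarrow>\<^sub>E S)"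
  by (simp add: fun_upd_in_PiE PiE_mem[of g "insert a R" "\<lambda>_. S" a])

lemma sum_PiE_insert':
  assumes "a \<notin> R"
  shows "(\<Sum>g\<in>insert a R \<rightarrow>\<^sub>E S. F g) = (\<Sum>w\<in>S. \<Sum>g\<in>R \<rightarrow>\<^sub>E S. F (g(a := w)))"
proof -
  have "(\<Sum>g\<in>insert a R \<rightarrow>\<^sub>E S. F g) = (\<Sum>p\<in>S \<times> (R \<rightarrow>\<^sub>E S). F ((snd p)(a := fst p)))"
    by (rule sum.reindex_bij_witness[where j = "\<lambda>g. (g a, g(a := undefined))" and i = "\<lambda>p. (snd p)(a := fst p)"])
      (simp_all only: t1[OF assms] t2 t3[OF assms] fst_conv snd_conv fun_upd_upd fun_upd_triv fun_upd_same)
  also have "\<dots> = (\<Sum>(w, g)\<in>S \<times> (R \<rightarrow>\<^sub>E S). F (g(a := w)))"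
    by (rule sum.cong) (simp_all only: split_beta)
  also have "\<dots> = (\<Sum>w\<in>S. \<Sum>g\<in>R \<rightarrow>\<^sub>E S. F (g(a := w)))"
    by (rule sum.cartesian_product[symmetric])
  finally show ?thesis .
qed

lemma leibniz:
  fixes H :: "'o \<Rightarrow> real^'d::finite \<Rightarrow> real" and i :: "'r \<Rightarrow> 'd"
  assumes R: "finite R" and S: "finite S" and sm: "\<forall>q\<in>S. smooth (H q)"
  shows "pdm (\<lambda>y. \<Prod>q\<in>S. H q y) (image_mset i (mset_set R)) =
    (\<lambda>y. \<Sum>g\<in>R \<rightarrow>\<^sub>E S. \<Prod>q\<in>S. pdm (H q) (image_mset i (mset_set {r\<in>R. g r = q})) y)"
  using R
proof (induction R rule: finite_induct)
  case empty
  then show ?case by simp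
next
  case (insert a R)
  define G where "G g q = pdm (H q) (image_mset i (mset_set {r\<in>R. g r = q}))" for g q
  have smP: "smooth (\<lambda>y. \<Prod>q\<in>S. H q y)" using sm by (rule smooth_prod)
  have smG: "smooth (G g q)" if "q \<in> S" for g q using sm that unfolding G_def by (simp add: smooth_pdm)
  have smT: "smooth (\<lambda>y. \<Prod>q\<in>S. G g q y)" for g using smG by (intro smooth_prod) auto
  have M: "image_mset i (mset_set (insert a R)) = add_mset (i a) (image_mset i (mset_set R))"
    using insert.hyps by simp
  show ?case
  proof
    fix x
    have "pdm (\<lambda>y. \<Prod>q\<in>S. H q y) (image_mset i (mset_set (insert a R))) x
        = partial (i a) (\<lambda>y. \<Sum>g\<in>R \<rightarrow>\<^sub>E S. \<Prod>q\<in>S. G g q y) x"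
      unfolding M pdm_add_mset[OF smP] insert.IH G_def by simp
    also have "\<dots> = (\<Sum>g\<in>R \<rightarrow>\<^sub>E S. partial (i a) (\<lambda>y. \<Prod>q\<in>S. G g q y) x)"
      using smT by (intro partial_sum) (auto intro: smooth_diff0)
    also have "\<dots> = (\<Sum>g\<in>R \<rightarrow>\<^sub>E S. \<Sum>w\<in>S. partial (i a) (G g w) x * (\<Prod>q\<in>S-{w}. G g q x))"
      using smG by (intro sum.cong refl partial_prod) (auto intro: smooth_diff0)
    also have "\<dots> = (\<Sum>w\<in>S. \<Sum>g\<in>R \<rightarrow>\<^sub>E S. partial (i a) (G g w) x * (\<Prod>q\<in>S-{w}. G g q x))"
      by (rule sum.swap)
    also have "\<dots> = (\<Sum>w\<in>S. \<Sum>g\<in>R \<rightarrow>\<^sub>E S.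
        \<Prod>q\<in>S. pdm (H q) (image_mset i (mset_set {r\<in>insert a R. (g(a := w)) r = q})) x)"
    proof (intro sum.cong refl)
      fix w g assume w: "w \<in> S" and g: "g \<in> R \<rightarrow>\<^sub>E S"
      have set: "{r\<in>insert a R. (g(a := w)) r = q} = (if q = w then insert a {r\<in>R. g r = q} else {r\<in>R. g r = q})" for q
        using insert.hyps by auto
      have "(\<Prod>q\<in>S. pdm (H q) (image_mset i (mset_set {r\<in>insert a R. (g(a := w)) r = q})) x)
          = pdm (H w) (image_mset i (mset_set {r\<in>insert a R. (g(a := w)) r = w})) x *
            (\<Prod>q\<in>S-{w}. pdm (H q) (image_mset i (mset_set {r\<in>insert a R. (g(a := w)) r = q})) x)"
        using w S by (simp add: prod.remove)
      also have "\<dots> = partial (i a) (G g w) x * (\<Prod>q\<in>S-{w}. G g q x)"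
      proof -
        have "pdm (H w) (image_mset i (mset_set {r\<in>insert a R. (g(a := w)) r = w}))
            = pdm (H w) (add_mset (i a) (image_mset i (mset_set {r\<in>R. g r = w})))"
          unfolding set using insert.hyps by simp
        also have "\<dots> = partial (i a) (G g w)"
          unfolding G_def using sm w by (simp add: pdm_add_mset)
        finally have 1: "pdm (H w) (image_mset i (mset_set {r\<in>insert a R. (g(a := w)) r = w})) = partial (i a) (G g w)" .
        have 2: "(\<Prod>q\<in>S-{w}. pdm (H q) (image_mset i (mset_set {r\<in>insert a R. (g(a := w)) r = q})) x)
            = (\<Prod>q\<in>S-{w}. G g q x)"
          unfolding set G_def by (intro prod.cong refl) auto
        show ?thesis unfolding 1 2 ..
      qed
      finally show "partial (i a) (G g w) x * (\<Prod>q\<in>S-{w}. G g q x)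
          = (\<Prod>q\<in>S. pdm (H q) (image_mset i (mset_set {r\<in>insert a R. (g(a := w)) r = q})) x)" by simp
    qed
    also have "\<dots> = (\<Sum>g\<in>insert a R \<rightarrow>\<^sub>E S.
        \<Prod>q\<in>S. pdm (H q) (image_mset i (mset_set {r\<in>insert a R. g r = q})) x)"
      by (simp only: sum_PiE_insert'[OF insert.hyps(2)])
    finally show "pdm (\<lambda>y. \<Prod>q\<in>S. H q y) (image_mset i (mset_set (insert a R))) x =
      (\<Sum>g\<in>insert a R \<rightarrow>\<^sub>E S. \<Prod>q\<in>S. pdm (H q) (image_mset i (mset_set {r\<in>insert a R. g r = q})) x)" .
  qed
qed



lemma nodes_graft[simp]: "nodes (graft \<pi> \<pi>' g) = nodes \<pi> <+> nodes \<pi>'"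
  by (simp add: graft_def)

lemma deco_graft_Inl[simp]: "deco (graft \<pi> \<pi>' g) (Inl v) = (if deco \<pi> v = 0 then 0 else 2 * deco \<pi> v)"
  by (simp add: graft_def)

lemma deco_graft_Inr[simp]: "deco (graft \<pi> \<pi>' g) (Inr w) = (if deco \<pi>' w = 0 then 0 else 2 * deco \<pi>' w + 1)"
  by (simp add: graft_def)

lemma parent_graft_Inl: "v \<in> nodes \<pi> \<Longrightarrow> parent (graft \<pi> \<pi>' g) (Inl v) =
   (case parent \<pi> v of Some w \<Rightarrow> Some (Inl w) | None \<Rightarrow> map_option Inr (g v))"
  by (simp add: graft_def)

lemma parent_graft_Inr: "parent (graft \<pi> \<pi>' g) (Inr w) = map_option Inr (parent \<pi>' w)"
  by (simp add: graft_def)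

lemma roots_graft: "roots (graft \<pi> \<pi>' g) = Inl ` {r \<in> roots \<pi>. g r = None} \<union> Inr ` roots \<pi>'"
proof (rule set_eqI)
  fix u show "u \<in> roots (graft \<pi> \<pi>' g) \<longleftrightarrow> u \<in> Inl ` {r \<in> roots \<pi>. g r = None} \<union> Inr ` roots \<pi>'"
  proof (cases u)
    case (Inl v)
    show ?thesis
    proof (cases "v \<in> nodes \<pi>")
      case True
      then show ?thesis using Inl
        by (auto simp: roots_def parent_graft_Inl split: option.splits)
    next
      case False
      then show ?thesis using Inl by (auto simp: roots_def)
    qed
  next
    case (Inr w)
    then show ?thesis by (auto simp: roots_def parent_graft_Inr)
  qed
qed

lemma preds_graft_Inl: "preds (graft \<pi> \<pi>' g) (Inl v) = Inl ` preds \<pi> v"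
proof (rule set_eqI)
  fix u show "u \<in> preds (graft \<pi> \<pi>' g) (Inl v) \<longleftrightarrow> u \<in> Inl ` preds \<pi> v"
  proof (cases u)
    case (Inl v')
    show ?thesis
    proof (cases "v' \<in> nodes \<pi>")
      case True
      then show ?thesis using Inl
        by (auto simp: preds_def parent_graft_Inl split: option.splits)
    next
      case False
      then show ?thesis using Inl by (auto simp: preds_def)
    qed
  next
    case (Inr w)
    then show ?thesis by (auto simp: preds_def parent_graft_Inr)
  qed
qed

lemma preds_graft_Inr: "preds (graft \<pi> \<pi>' g) (Inr w) = Inl ` {r \<in> roots \<pi>. g r = Some w} \<union> Inr ` preds \<pi>' w"
proof (rule set_eqI)
  fix u show "u \<in> preds (graft \<pi> \<pi>' g) (Inr w) \<longleftrightarrow> u \<in> Inl ` {r \<in> roots \<pi>. g r = Some w} \<union> Inr ` preds \<pi>' w"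
  proof (cases u)
    case (Inl v')
    show ?thesis
    proof (cases "v' \<in> nodes \<pi>")
      case True
      then show ?thesis using Inl
        by (auto simp: preds_def roots_def parent_graft_Inl split: option.splits)
    next
      case False
      then show ?thesis using Inl by (auto simp: preds_def roots_def)
    qed
  next
    case (Inr w')
    then show ?thesis by (auto simp: preds_def parent_graft_Inr)
  qed
qed

lemma lianas_graft: "lianas (graft \<pi> \<pi>' g) = (\<lambda>k. 2 * k) ` lianas \<pi> \<union> (\<lambda>k. 2 * k + 1) ` lianas \<pi>'"
proof (rule set_eqI)
  fix n
  show "n \<in> lianas (graft \<pi> \<pi>' g) \<longleftrightarrow> n \<in> (\<lambda>k. 2 * k) ` lianas \<pi> \<union> (\<lambda>k. 2 * k + 1) ` lianas \<pi>'"
  proof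
    assume "n \<in> lianas (graft \<pi> \<pi>' g)"
    then obtain u where u: "u \<in> nodes \<pi> <+> nodes \<pi>'" "n = deco (graft \<pi> \<pi>' g) u" "n \<noteq> 0"
      unfolding lianas_def by auto
    show "n \<in> (\<lambda>k. 2 * k) ` lianas \<pi> \<union> (\<lambda>k. 2 * k + 1) ` lianas \<pi>'"
    proof (cases u)
      case (Inl v)
      then have "v \<in> nodes \<pi>" "deco \<pi> v \<noteq> 0" "n = 2 * deco \<pi> v" using u by (auto split: if_splits)
      then show ?thesis unfolding lianas_def by auto
    next
      case (Inr w)
      then have "w \<in> nodes \<pi>'" "deco \<pi>' w \<noteq> 0" "n = 2 * deco \<pi>' w + 1" using u by (auto split: if_splits)
      then show ?thesis unfolding lianas_def by auto
    qed
  next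
    assume "n \<in> (\<lambda>k. 2 * k) ` lianas \<pi> \<union> (\<lambda>k. 2 * k + 1) ` lianas \<pi>'"
    then show "n \<in> lianas (graft \<pi> \<pi>' g)"
    proof
      assume "n \<in> (\<lambda>k. 2 * k) ` lianas \<pi>"
      then obtain v where "v \<in> nodes \<pi>" "deco \<pi> v \<noteq> 0" "n = 2 * deco \<pi> v" unfolding lianas_def by auto
      then have "deco (graft \<pi> \<pi>' g) (Inl v) = n" "Inl v \<in> nodes (graft \<pi> \<pi>' g)" "n \<noteq> 0" by auto
      then show ?thesis unfolding lianas_def by (metis DiffI image_eqI singletonD)
    next
      assume "n \<in> (\<lambda>k. 2 * k + 1) ` lianas \<pi>'"
      then obtain w where "w \<in> nodes \<pi>'" "deco \<pi>' w \<noteq> 0" "n = 2 * deco \<pi>' w + 1" unfolding lianas_def by auto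
      then have "deco (graft \<pi> \<pi>' g) (Inr w) = n" "Inr w \<in> nodes (graft \<pi> \<pi>' g)" "n \<noteq> 0" by auto
      then show ?thesis unfolding lianas_def by (metis DiffI image_eqI singletonD)
    qed
  qed
qed

lemma case_sum_split: "case_sum (\<lambda>a. I (Inl a)) (\<lambda>b. I (Inr b)) = I"
proof
  fix u show "case_sum (\<lambda>a. I (Inl a)) (\<lambda>b. I (Inr b)) u = I u" by (cases u) simp_all
qed

lemma sum_PiE_Plus:
  "(\<Sum>I\<in>(A <+> B) \<rightarrow>\<^sub>E V. F I) = (\<Sum>i\<in>A \<rightarrow>\<^sub>E V. \<Sum>i'\<in>B \<rightarrow>\<^sub>E V. F (case_sum i i'))"
proof -
  have "(\<Sum>I\<in>(A <+> B) \<rightarrow>\<^sub>E V. F I) = (\<Sum>p\<in>(A \<rightarrow>\<^sub>E V) \<times> (B \<rightarrow>\<^sub>E V). F (case_sum (fst p) (snd p)))"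
  proof (rule sum.reindex_bij_witness[where j = "\<lambda>I. (\<lambda>a. I (Inl a), \<lambda>b. I (Inr b))" and i = "\<lambda>p. case_sum (fst p) (snd p)"])
    fix I assume "I \<in> (A <+> B) \<rightarrow>\<^sub>E V"
    show "case_sum (fst (\<lambda>a. I (Inl a), \<lambda>b. I (Inr b))) (snd (\<lambda>a. I (Inl a), \<lambda>b. I (Inr b))) = I"
    proof
      fix u show "case_sum (fst (\<lambda>a. I (Inl a), \<lambda>b. I (Inr b))) (snd (\<lambda>a. I (Inl a), \<lambda>b. I (Inr b))) u = I u"
        by (cases u) simp_all
    qed
  next
    fix I assume I: "I \<in> (A <+> B) \<rightarrow>\<^sub>E V"
    have 1: "(\<lambda>a. I (Inl a)) \<in> A \<rightarrow>\<^sub>E V"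
    proof (rule PiE_I)
      fix a assume "a \<in> A" then show "I (Inl a) \<in> V" using I by (auto dest: PiE_mem)
    next
      fix a assume "a \<notin> A" then have "Inl a \<notin> A <+> B" by auto
      then show "I (Inl a) = undefined" by (rule PiE_arb[OF I])
    qed
    have 2: "(\<lambda>b. I (Inr b)) \<in> B \<rightarrow>\<^sub>E V"
    proof (rule PiE_I)
      fix b assume "b \<in> B" then show "I (Inr b) \<in> V" using I by (auto dest: PiE_mem)
    next
      fix b assume "b \<notin> B" then have "Inr b \<notin> A <+> B" by auto
      then show "I (Inr b) = undefined" by (rule PiE_arb[OF I])
    qed
    show "(\<lambda>a. I (Inl a), \<lambda>b. I (Inr b)) \<in> (A \<rightarrow>\<^sub>E V) \<times> (B \<rightarrow>\<^sub>E V)" using 1 2 by simp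
  next
    fix p assume "p \<in> (A \<rightarrow>\<^sub>E V) \<times> (B \<rightarrow>\<^sub>E V)"
    show "(\<lambda>a. case_sum (fst p) (snd p) (Inl a), \<lambda>b. case_sum (fst p) (snd p) (Inr b)) = p"
      by simp
  next
    fix p assume p: "p \<in> (A \<rightarrow>\<^sub>E V) \<times> (B \<rightarrow>\<^sub>E V)"
    then have a: "fst p \<in> A \<rightarrow>\<^sub>E V" and b: "snd p \<in> B \<rightarrow>\<^sub>E V" by (auto simp: mem_Times_iff)
    show "case_sum (fst p) (snd p) \<in> (A <+> B) \<rightarrow>\<^sub>E V"
    proof (rule PiE_I)
      fix u assume "u \<in> A <+> B"
      then show "case_sum (fst p) (snd p) u \<in> V" using a b by (auto dest: PiE_mem)
    next
      fix u assume u: "u \<notin> A <+> B"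
      show "case_sum (fst p) (snd p) u = undefined"
      proof (cases u)
        case (Inl x) then have "x \<notin> A" using u by auto
        then show ?thesis using Inl PiE_arb[OF a] by simp
      next
        case (Inr x) then have "x \<notin> B" using u by auto
        then show ?thesis using Inr PiE_arb[OF b] by simp
      qed
    qed
  qed (simp add: case_sum_split)
  also have "\<dots> = (\<Sum>(i, i')\<in>(A \<rightarrow>\<^sub>E V) \<times> (B \<rightarrow>\<^sub>E V). F (case_sum i i'))"
    by (rule sum.cong) (simp_all only: split_beta)
  also have "\<dots> = (\<Sum>i\<in>A \<rightarrow>\<^sub>E V. \<Sum>i'\<in>B \<rightarrow>\<^sub>E V. F (case_sum i i'))"
    by (rule sum.cartesian_product[symmetric])
  finally show ?thesis .
qed

definition joinP :: "nat set \<Rightarrow> nat set \<Rightarrow> (nat \<Rightarrow> nat) \<Rightarrow> (nat \<Rightarrow> nat) \<Rightarrow> nat \<Rightarrow> nat" where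
  "joinP L L' p p' n = (if n \<in> (\<lambda>k. 2 * k) ` L then p (n div 2)
      else if n \<in> (\<lambda>k. 2 * k + 1) ` L' then p' (n div 2) else undefined)"

lemma joinP_even: "k \<in> L \<Longrightarrow> joinP L L' p p' (2 * k) = p k"
  unfolding joinP_def by auto

lemma joinP_odd: "k \<in> L' \<Longrightarrow> joinP L L' p p' (2 * k + 1) = p' k"
proof -
  assume k: "k \<in> L'"
  have "2 * k + 1 \<notin> (\<lambda>k. 2 * k) ` L" by auto presburger
  then show ?thesis unfolding joinP_def using k by auto
qed

lemma joinP_odd': "k \<in> L' \<Longrightarrow> joinP L L' p p' (Suc (2 * k)) = p' k"
  using joinP_odd[of k L' L p p'] by simp

lemma jr:
  assumes P: "P \<in> ((\<lambda>k. 2 * k) ` L \<union> (\<lambda>k. 2 * k + 1) ` L') \<rightarrow>\<^sub>E V"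
  shows "joinP L L' (restrict (\<lambda>k. P (2 * k)) L) (restrict (\<lambda>k. P (2 * k + 1)) L') = P"
proof
      fix n
      show "joinP L L' (restrict (\<lambda>k. P (2 * k)) L)
            (restrict (\<lambda>k. P (2 * k + 1)) L') n = P n"
      proof (cases "n \<in> (\<lambda>k. 2 * k) ` L")
        case True
        then obtain k where k: "k \<in> L" "n = 2 * k" by auto
        then show ?thesis by (simp add: joinP_even)
      next
        case False
        show ?thesis
        proof (cases "n \<in> (\<lambda>k. 2 * k + 1) ` L'")
          case True
          then obtain k where k: "k \<in> L'" "n = 2 * k + 1" by auto
          then show ?thesis by (simp add: joinP_odd joinP_odd')
        next
          case False2: False
          then have "n \<notin> ((\<lambda>k. 2 * k) ` L \<union> (\<lambda>k. 2 * k + 1) ` L')" using False by auto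
          then have "P n = undefined" by (rule PiE_arb[OF P])
          then show ?thesis using False False2 unfolding joinP_def by simp
        qed
      qed
    qed

lemma sum_PiE_join:
  "(\<Sum>P\<in>((\<lambda>k. 2 * k) ` L \<union> (\<lambda>k. 2 * k + 1) ` L') \<rightarrow>\<^sub>E V. F P) =
   (\<Sum>p\<in>L \<rightarrow>\<^sub>E V. \<Sum>p'\<in>L' \<rightarrow>\<^sub>E V. F (joinP L L' p p'))"
proof -
  let ?LL = "(\<lambda>k. 2 * k) ` L \<union> (\<lambda>k. 2 * k + 1) ` L'"
  have odd_not_even: "2 * k + 1 \<notin> (\<lambda>k. 2 * k) ` L" for k :: nat by auto presburger
  have "(\<Sum>P\<in>?LL \<rightarrow>\<^sub>E V. F P) = (\<Sum>p\<in>(L \<rightarrow>\<^sub>E V) \<times> (L' \<rightarrow>\<^sub>E V). F (joinP L L' (fst p) (snd p)))"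
  proof (rule sum.reindex_bij_witness[where j = "\<lambda>P. (restrict (\<lambda>k. P (2 * k)) L, restrict (\<lambda>k. P (2 * k + 1)) L')"
        and i = "\<lambda>p. joinP L L' (fst p) (snd p)"])
    fix P assume P: "P \<in> ?LL \<rightarrow>\<^sub>E V"
    show "joinP L L' (fst (restrict (\<lambda>k. P (2 * k)) L, restrict (\<lambda>k. P (2 * k + 1)) L'))
            (snd (restrict (\<lambda>k. P (2 * k)) L, restrict (\<lambda>k. P (2 * k + 1)) L')) = P"
      using jr[OF P] by simp
  next
  next
    fix P assume P: "P \<in> ?LL \<rightarrow>\<^sub>E V"
    have "restrict (\<lambda>k. P (2 * k)) L \<in> L \<rightarrow>\<^sub>E V"
      by (rule restrict_PiE_iff[THEN iffD2]) (auto intro: PiE_mem[OF P])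
    moreover have "restrict (\<lambda>k. P (2 * k + 1)) L' \<in> L' \<rightarrow>\<^sub>E V"
      by (rule restrict_PiE_iff[THEN iffD2]) (auto intro: PiE_mem[OF P])
    ultimately show "(restrict (\<lambda>k. P (2 * k)) L, restrict (\<lambda>k. P (2 * k + 1)) L') \<in> (L \<rightarrow>\<^sub>E V) \<times> (L' \<rightarrow>\<^sub>E V)"
      by simp
  next
    fix p assume p: "p \<in> (L \<rightarrow>\<^sub>E V) \<times> (L' \<rightarrow>\<^sub>E V)"
    then have a: "fst p \<in> L \<rightarrow>\<^sub>E V" and b: "snd p \<in> L' \<rightarrow>\<^sub>E V" by (auto simp: mem_Times_iff)
    have 1: "restrict (\<lambda>k. joinP L L' (fst p) (snd p) (2 * k)) L = fst p"
    proof
      fix k show "restrict (\<lambda>k. joinP L L' (fst p) (snd p) (2 * k)) L k = fst p k"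
        using PiE_arb[OF a, of k] by (cases "k \<in> L") (simp_all add: joinP_even)
    qed
    have 2: "restrict (\<lambda>k. joinP L L' (fst p) (snd p) (2 * k + 1)) L' = snd p"
    proof
      fix k show "restrict (\<lambda>k. joinP L L' (fst p) (snd p) (2 * k + 1)) L' k = snd p k"
        using PiE_arb[OF b, of k] by (cases "k \<in> L'") (simp_all add: joinP_odd joinP_odd')
    qed
    show "(restrict (\<lambda>k. joinP L L' (fst p) (snd p) (2 * k)) L,
           restrict (\<lambda>k. joinP L L' (fst p) (snd p) (2 * k + 1)) L') = p"
      unfolding 1 2 by simp
  next
    fix p assume p: "p \<in> (L \<rightarrow>\<^sub>E V) \<times> (L' \<rightarrow>\<^sub>E V)"
    then have a: "fst p \<in> L \<rightarrow>\<^sub>E V" and b: "snd p \<in> L' \<rightarrow>\<^sub>E V" by (auto simp: mem_Times_iff)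
    show "joinP L L' (fst p) (snd p) \<in> ?LL \<rightarrow>\<^sub>E V"
    proof (rule PiE_I)
      fix n assume "n \<in> ?LL"
      then show "joinP L L' (fst p) (snd p) n \<in> V"
      proof
        assume "n \<in> (\<lambda>k. 2 * k) ` L"
        then obtain k where k: "k \<in> L" "n = 2 * k" by auto
        then show ?thesis using PiE_mem[OF a k(1)] by (simp add: joinP_even)
      next
        assume "n \<in> (\<lambda>k. 2 * k + 1) ` L'"
        then obtain k where k: "k \<in> L'" "n = 2 * k + 1" by auto
        then show ?thesis using PiE_mem[OF b k(1)] by (simp add: joinP_odd joinP_odd')
      qed
    next
      fix n assume "n \<notin> ?LL"
      then show "joinP L L' (fst p) (snd p) n = undefined" unfolding joinP_def by auto
    qed
  qed (simp only: fst_conv snd_conv jr)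
  also have "\<dots> = (\<Sum>(p, p')\<in>(L \<rightarrow>\<^sub>E V) \<times> (L' \<rightarrow>\<^sub>E V). F (joinP L L' p p'))"
    by (rule sum.cong) (simp_all only: split_beta)
  also have "\<dots> = (\<Sum>p\<in>L \<rightarrow>\<^sub>E V. \<Sum>p'\<in>L' \<rightarrow>\<^sub>E V. F (joinP L L' p p'))"
    by (rule sum.cartesian_product[symmetric])
  finally show ?thesis .
qed

lemma image_mset_case_sum:
  assumes "finite A" "finite B"
  shows "image_mset (case_sum i i') (mset_set (Inl ` A \<union> Inr ` B)) = image_mset i (mset_set A) + image_mset i' (mset_set B)"
proof -
  have 1: "mset_set (Inl ` A \<union> Inr ` B) = mset_set (Inl ` A) + mset_set (Inr ` B)"
    using assms by (intro mset_set_Union) auto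
  have 2: "mset_set (Inl ` A) = image_mset Inl (mset_set A)"
    by (rule image_mset_mset_set[symmetric]) (auto intro: inj_onI)
  have 3: "mset_set (Inr ` B) = image_mset Inr (mset_set B)"
    by (rule image_mset_mset_set[symmetric]) (auto intro: inj_onI)
  have 4: "case_sum i i' \<circ> Inl = i" "case_sum i i' \<circ> Inr = i'" by (auto simp: fun_eq_iff)
  show ?thesis unfolding 1 2 3 image_mset_union image_mset.compositionality 4 ..
qed

lemma image_mset_case_sum_Inl:
  assumes "finite A"
  shows "image_mset (case_sum i i') (mset_set (Inl ` A)) = image_mset i (mset_set A)"
  using image_mset_case_sum[OF assms finite.emptyI, of i i'] by simp



definition fcomp :: "(nat \<Rightarrow> real^'d::finite \<Rightarrow> real^'d) \<Rightarrow> 'a forest \<Rightarrow> (nat \<Rightarrow> nat) \<Rightarrow> ('a \<Rightarrow> 'd) \<Rightarrow> 'a \<Rightarrow> real^'d \<Rightarrow> real" where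
  "fcomp f \<pi> p i v = (\<lambda>y. f (if deco \<pi> v = 0 then 0 else p (deco \<pi> v)) y $ i v)"

lemma Fexo_alt: "Fexo f m \<pi> \<phi> x = (\<Sum>i\<in>nodes \<pi> \<rightarrow>\<^sub>E UNIV. \<Sum>p\<in>lianas \<pi> \<rightarrow>\<^sub>E {1..m}.
    pdm \<phi> (image_mset i (mset_set (roots \<pi>))) x *
    (\<Prod>v\<in>nodes \<pi>. pdm (fcomp f \<pi> p i v) (image_mset i (mset_set (preds \<pi> v))) x))"
  unfolding Fexo_def fcomp_def ..

lemma smooth_fcomp:
  assumes smf: "\<forall>q \<le> m. \<forall>j. smooth (\<lambda>x. f q x $ j)"
    and p: "p \<in> lianas \<pi> \<rightarrow>\<^sub>E {1..m}" and v: "v \<in> nodes \<pi>"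
  shows "smooth (fcomp f \<pi> p i v)"
proof (cases "deco \<pi> v = 0")
  case True
  then show ?thesis unfolding fcomp_def using smf by simp
next
  case False
  then have "deco \<pi> v \<in> lianas \<pi>" using v unfolding lianas_def by auto
  then have "p (deco \<pi> v) \<in> {1..m}" by (rule PiE_mem[OF p])
  then have "p (deco \<pi> v) \<le> m" by simp
  then show ?thesis unfolding fcomp_def using smf False by simp
qed

definition BR where
  "BR f \<pi>' \<phi> R i i' p' g x =
    pdm \<phi> (image_mset i (mset_set {r\<in>R. g r = None}) + image_mset i' (mset_set (roots \<pi>'))) x *
    (\<Prod>w\<in>nodes \<pi>'. pdm (fcomp f \<pi>' p' i' w)
        (image_mset i (mset_set {r\<in>R. g r = Some w}) + image_mset i' (mset_set (preds \<pi>' w))) x)"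

definition CC where
  "CC f \<pi> i p x = (\<Prod>v\<in>nodes \<pi>. pdm (fcomp f \<pi> p i v) (image_mset i (mset_set (preds \<pi> v))) x)"

lemma finite_roots: "finite (nodes \<pi>) \<Longrightarrow> finite (roots \<pi>)"
  unfolding roots_def by simp

lemma finite_preds: "finite (nodes \<pi>) \<Longrightarrow> finite (preds \<pi> v)"
  unfolding preds_def by simp

lemma step1:
  fixes f :: "nat \<Rightarrow> real^'d::finite \<Rightarrow> real^'d" and \<pi>' :: "'b forest" and \<phi> :: "real^'d \<Rightarrow> real"
    and R :: "'a set" and i :: "'a \<Rightarrow> 'd"
  assumes smf: "\<forall>q \<le> m. \<forall>j. smooth (\<lambda>x. f q x $ j)" and sm\<phi>: "smooth \<phi>"
    and finN: "finite (nodes \<pi>')" and finR: "finite R"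
  shows "pdm (Fexo f m \<pi>' \<phi>) (image_mset i (mset_set R)) x =
    (\<Sum>i'\<in>nodes \<pi>' \<rightarrow>\<^sub>E UNIV. \<Sum>p'\<in>lianas \<pi>' \<rightarrow>\<^sub>E {1..m}. \<Sum>g\<in>R \<rightarrow>\<^sub>E insert None (Some ` nodes \<pi>').
       BR f \<pi>' \<phi> R i i' p' g x)"
proof -
  define S where "S = insert None (Some ` nodes \<pi>')"
  define H where "H i' p' q = (case q of None \<Rightarrow> pdm \<phi> (image_mset i' (mset_set (roots \<pi>')))
       | Some w \<Rightarrow> pdm (fcomp f \<pi>' p' i' w) (image_mset i' (mset_set (preds \<pi>' w))))" for i' p' q
  define T where "T i' p' = (\<lambda>y. \<Prod>q\<in>S. H i' p' q y)" for i' p'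
  have finS: "finite S" unfolding S_def using finN by simp
  have smH: "smooth (H i' p' q)" if "p' \<in> lianas \<pi>' \<rightarrow>\<^sub>E {1..m}" "q \<in> S" for i' p' q
  proof (cases q)
    case None then show ?thesis unfolding H_def using sm\<phi> by (simp add: smooth_pdm)
  next
    case (Some w)
    then have "w \<in> nodes \<pi>'" using that(2) unfolding S_def by auto
    then show ?thesis unfolding H_def using Some smooth_fcomp[OF smf that(1)] by (simp add: smooth_pdm)
  qed
  have smT: "smooth (T i' p')" if "p' \<in> lianas \<pi>' \<rightarrow>\<^sub>E {1..m}" for i' p'
    unfolding T_def using smH[OF that] by (intro smooth_prod) auto
  have Tprod: "T i' p' y = pdm \<phi> (image_mset i' (mset_set (roots \<pi>'))) y *
      (\<Prod>w\<in>nodes \<pi>'. pdm (fcomp f \<pi>' p' i' w) (image_mset i' (mset_set (preds \<pi>' w))) y)" for i' p' y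
  proof -
    have "T i' p' y = H i' p' None y * (\<Prod>q\<in>Some ` nodes \<pi>'. H i' p' q y)"
      unfolding T_def S_def using finN by (subst prod.insert) auto
    also have "(\<Prod>q\<in>Some ` nodes \<pi>'. H i' p' q y) = (\<Prod>w\<in>nodes \<pi>'. H i' p' (Some w) y)"
      by (subst prod.reindex) (auto intro: inj_onI)
    finally show ?thesis unfolding H_def by simp
  qed
  have F: "Fexo f m \<pi>' \<phi> = (\<lambda>y. \<Sum>i'\<in>nodes \<pi>' \<rightarrow>\<^sub>E UNIV. \<Sum>p'\<in>lianas \<pi>' \<rightarrow>\<^sub>E {1..m}. T i' p' y)"
    by (rule ext) (simp only: Fexo_alt Tprod)
  have "pdm (Fexo f m \<pi>' \<phi>) (image_mset i (mset_set R)) =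
     (\<lambda>y. \<Sum>i'\<in>nodes \<pi>' \<rightarrow>\<^sub>E UNIV. pdm (\<lambda>y. \<Sum>p'\<in>lianas \<pi>' \<rightarrow>\<^sub>E {1..m}. T i' p' y) (image_mset i (mset_set R)) y)"
    unfolding F using smT by (intro pdm_sum) (auto intro: smooth_sum)
  also have "\<dots> = (\<lambda>y. \<Sum>i'\<in>nodes \<pi>' \<rightarrow>\<^sub>E UNIV. \<Sum>p'\<in>lianas \<pi>' \<rightarrow>\<^sub>E {1..m}. pdm (T i' p') (image_mset i (mset_set R)) y)"
    using smT by (subst pdm_sum) auto
  finally have 1: "pdm (Fexo f m \<pi>' \<phi>) (image_mset i (mset_set R)) x =
     (\<Sum>i'\<in>nodes \<pi>' \<rightarrow>\<^sub>E UNIV. \<Sum>p'\<in>lianas \<pi>' \<rightarrow>\<^sub>E {1..m}. pdm (T i' p') (image_mset i (mset_set R)) x)"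
    by simp
  have 2: "pdm (T i' p') (image_mset i (mset_set R)) x = (\<Sum>g\<in>R \<rightarrow>\<^sub>E S. BR f \<pi>' \<phi> R i i' p' g x)"
    if p': "p' \<in> lianas \<pi>' \<rightarrow>\<^sub>E {1..m}" for i' p'
  proof -
    have "pdm (T i' p') (image_mset i (mset_set R)) x =
      (\<Sum>g\<in>R \<rightarrow>\<^sub>E S. \<Prod>q\<in>S. pdm (H i' p' q) (image_mset i (mset_set {r\<in>R. g r = q})) x)"
      unfolding T_def using leibniz[OF finR finS, of "H i' p'" i] smH[OF p'] by simp
    also have "\<dots> = (\<Sum>g\<in>R \<rightarrow>\<^sub>E S. BR f \<pi>' \<phi> R i i' p' g x)"
    proof (rule sum.cong[OF refl])
      fix g
      have "(\<Prod>q\<in>S. pdm (H i' p' q) (image_mset i (mset_set {r\<in>R. g r = q})) x)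
        = pdm (H i' p' None) (image_mset i (mset_set {r\<in>R. g r = None})) x *
          (\<Prod>q\<in>Some ` nodes \<pi>'. pdm (H i' p' q) (image_mset i (mset_set {r\<in>R. g r = q})) x)"
        unfolding S_def using finN by (subst prod.insert) auto
      also have "(\<Prod>q\<in>Some ` nodes \<pi>'. pdm (H i' p' q) (image_mset i (mset_set {r\<in>R. g r = q})) x)
         = (\<Prod>w\<in>nodes \<pi>'. pdm (H i' p' (Some w)) (image_mset i (mset_set {r\<in>R. g r = Some w})) x)"
        by (subst prod.reindex) (auto intro: inj_onI)
      also have "pdm (H i' p' None) (image_mset i (mset_set {r\<in>R. g r = None}))
         = pdm \<phi> (image_mset i (mset_set {r\<in>R. g r = None}) + image_mset i' (mset_set (roots \<pi>')))"
        unfolding H_def using pdm_add[OF sm\<phi>] by simp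
      also have "(\<Prod>w\<in>nodes \<pi>'. pdm (H i' p' (Some w)) (image_mset i (mset_set {r\<in>R. g r = Some w})) x)
         = (\<Prod>w\<in>nodes \<pi>'. pdm (fcomp f \<pi>' p' i' w)
              (image_mset i (mset_set {r\<in>R. g r = Some w}) + image_mset i' (mset_set (preds \<pi>' w))) x)"
      proof (rule prod.cong[OF refl])
        fix w assume w: "w \<in> nodes \<pi>'"
        show "pdm (H i' p' (Some w)) (image_mset i (mset_set {r\<in>R. g r = Some w})) x =
              pdm (fcomp f \<pi>' p' i' w)
              (image_mset i (mset_set {r\<in>R. g r = Some w}) + image_mset i' (mset_set (preds \<pi>' w))) x"
          unfolding H_def using pdm_add[OF smooth_fcomp[OF smf p' w]] by simp
      qed
      finally show "(\<Prod>q\<in>S. pdm (H i' p' q) (image_mset i (mset_set {r\<in>R. g r = q})) x) = BR f \<pi>' \<phi> R i i' p' g x"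
        unfolding BR_def .
    qed
    finally show ?thesis .
  qed
  show ?thesis unfolding 1 S_def[symmetric] using 2 by (intro sum.cong refl) auto
qed



lemma termeq:
  fixes f :: "nat \<Rightarrow> real^'d::finite \<Rightarrow> real^'d" and \<pi> :: "'a forest" and \<pi>' :: "'b forest"
    and \<phi> :: "real^'d \<Rightarrow> real" and g :: "'a \<Rightarrow> 'b option"
  assumes finN: "finite (nodes \<pi>)" and finN': "finite (nodes \<pi>')"
    and p: "p \<in> lianas \<pi> \<rightarrow>\<^sub>E {1..m}" and p': "p' \<in> lianas \<pi>' \<rightarrow>\<^sub>E {1..m}"
  shows "pdm \<phi> (image_mset (case_sum i i') (mset_set (roots (graft \<pi> \<pi>' g)))) x *
     (\<Prod>u\<in>nodes \<pi> <+> nodes \<pi>'. pdm (fcomp f (graft \<pi> \<pi>' g) (joinP (lianas \<pi>) (lianas \<pi>') p p') (case_sum i i') u)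
         (image_mset (case_sum i i') (mset_set (preds (graft \<pi> \<pi>' g) u))) x)
   = BR f \<pi>' \<phi> (roots \<pi>) i i' p' g x * CC f \<pi> i p x"
proof -
  let ?P = "joinP (lianas \<pi>) (lianas \<pi>') p p'"
  let ?I = "case_sum i i'"
  have r: "image_mset ?I (mset_set (roots (graft \<pi> \<pi>' g))) =
      image_mset i (mset_set {r \<in> roots \<pi>. g r = None}) + image_mset i' (mset_set (roots \<pi>'))"
    unfolding roots_graft using finN finN' by (intro image_mset_case_sum) (auto simp: finite_roots)
  have l: "pdm (fcomp f (graft \<pi> \<pi>' g) ?P ?I (Inl v)) (image_mset ?I (mset_set (preds (graft \<pi> \<pi>' g) (Inl v)))) x
      = pdm (fcomp f \<pi> p i v) (image_mset i (mset_set (preds \<pi> v))) x" if v: "v \<in> nodes \<pi>" for v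
  proof -
    have "fcomp f (graft \<pi> \<pi>' g) ?P ?I (Inl v) = fcomp f \<pi> p i v"
    proof (cases "deco \<pi> v = 0")
      case True then show ?thesis unfolding fcomp_def by simp
    next
      case False
      then have "deco \<pi> v \<in> lianas \<pi>" using v unfolding lianas_def by auto
      then have "?P (2 * deco \<pi> v) = p (deco \<pi> v)" by (rule joinP_even)
      then show ?thesis unfolding fcomp_def using False by simp
    qed
    moreover have "image_mset ?I (mset_set (preds (graft \<pi> \<pi>' g) (Inl v))) = image_mset i (mset_set (preds \<pi> v))"
      unfolding preds_graft_Inl using finN by (intro image_mset_case_sum_Inl finite_preds)
    ultimately show ?thesis by simp
  qed
  have rr: "pdm (fcomp f (graft \<pi> \<pi>' g) ?P ?I (Inr w)) (image_mset ?I (mset_set (preds (graft \<pi> \<pi>' g) (Inr w)))) x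
      = pdm (fcomp f \<pi>' p' i' w) (image_mset i (mset_set {r\<in>roots \<pi>. g r = Some w}) + image_mset i' (mset_set (preds \<pi>' w))) x"
    if w: "w \<in> nodes \<pi>'" for w
  proof -
    have "fcomp f (graft \<pi> \<pi>' g) ?P ?I (Inr w) = fcomp f \<pi>' p' i' w"
    proof (cases "deco \<pi>' w = 0")
      case True then show ?thesis unfolding fcomp_def by simp
    next
      case False
      then have d: "deco \<pi>' w \<in> lianas \<pi>'" using w unfolding lianas_def by auto
      have "?P (2 * deco \<pi>' w + 1) = p' (deco \<pi>' w)" by (rule joinP_odd[OF d])
      moreover have "?P (Suc (2 * deco \<pi>' w)) = p' (deco \<pi>' w)" by (rule joinP_odd'[OF d])
      ultimately show ?thesis unfolding fcomp_def using False by simp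
    qed
    moreover have "image_mset ?I (mset_set (preds (graft \<pi> \<pi>' g) (Inr w))) =
        image_mset i (mset_set {r\<in>roots \<pi>. g r = Some w}) + image_mset i' (mset_set (preds \<pi>' w))"
      unfolding preds_graft_Inr using finN finN' by (intro image_mset_case_sum) (auto simp: finite_roots finite_preds)
    ultimately show ?thesis by simp
  qed
  have pr: "(\<Prod>u\<in>nodes \<pi> <+> nodes \<pi>'. pdm (fcomp f (graft \<pi> \<pi>' g) ?P ?I u)
         (image_mset ?I (mset_set (preds (graft \<pi> \<pi>' g) u))) x)
     = CC f \<pi> i p x * (\<Prod>w\<in>nodes \<pi>'. pdm (fcomp f \<pi>' p' i' w)
          (image_mset i (mset_set {r\<in>roots \<pi>. g r = Some w}) + image_mset i' (mset_set (preds \<pi>' w))) x)"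
    unfolding prod.Plus[OF finN finN'] CC_def comp_def using l rr by (simp cong: prod.cong)
  show ?thesis unfolding r pr BR_def by (simp only: ac_simps)
qed

lemma step3:
  fixes f :: "nat \<Rightarrow> real^'d::finite \<Rightarrow> real^'d" and \<pi> :: "'a forest" and \<pi>' :: "'b forest"
    and \<phi> :: "real^'d \<Rightarrow> real" and g :: "'a \<Rightarrow> 'b option"
  assumes finN: "finite (nodes \<pi>)" and finN': "finite (nodes \<pi>')"
  shows "Fexo f m (graft \<pi> \<pi>' g) \<phi> x =
    (\<Sum>i\<in>nodes \<pi> \<rightarrow>\<^sub>E UNIV. \<Sum>i'\<in>nodes \<pi>' \<rightarrow>\<^sub>E UNIV. \<Sum>p\<in>lianas \<pi> \<rightarrow>\<^sub>E {1..m}. \<Sum>p'\<in>lianas \<pi>' \<rightarrow>\<^sub>E {1..m}.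
       BR f \<pi>' \<phi> (roots \<pi>) i i' p' g x * CC f \<pi> i p x)"
proof -
  have "Fexo f m (graft \<pi> \<pi>' g) \<phi> x =
    (\<Sum>i\<in>nodes \<pi> \<rightarrow>\<^sub>E UNIV. \<Sum>i'\<in>nodes \<pi>' \<rightarrow>\<^sub>E UNIV. \<Sum>p\<in>lianas \<pi> \<rightarrow>\<^sub>E {1..m}. \<Sum>p'\<in>lianas \<pi>' \<rightarrow>\<^sub>E {1..m}.
      pdm \<phi> (image_mset (case_sum i i') (mset_set (roots (graft \<pi> \<pi>' g)))) x *
     (\<Prod>u\<in>nodes \<pi> <+> nodes \<pi>'. pdm (fcomp f (graft \<pi> \<pi>' g) (joinP (lianas \<pi>) (lianas \<pi>') p p') (case_sum i i') u)
         (image_mset (case_sum i i') (mset_set (preds (graft \<pi> \<pi>' g) u))) x))"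
    by (simp only: Fexo_alt nodes_graft lianas_graft sum_PiE_Plus sum_PiE_join)
  also have "\<dots> = (\<Sum>i\<in>nodes \<pi> \<rightarrow>\<^sub>E UNIV. \<Sum>i'\<in>nodes \<pi>' \<rightarrow>\<^sub>E UNIV. \<Sum>p\<in>lianas \<pi> \<rightarrow>\<^sub>E {1..m}. \<Sum>p'\<in>lianas \<pi>' \<rightarrow>\<^sub>E {1..m}.
       BR f \<pi>' \<phi> (roots \<pi>) i i' p' g x * CC f \<pi> i p x)"
    by (intro sum.cong refl termeq[OF finN finN'])
  finally show ?thesis .
qed

lemma reorder5:
  "(\<Sum>a\<in>A. \<Sum>b\<in>B. \<Sum>c\<in>C. \<Sum>d\<in>D. \<Sum>e\<in>E. F a b c d e) =
   (\<Sum>e\<in>E. \<Sum>a\<in>A. \<Sum>c\<in>C. \<Sum>b\<in>B. \<Sum>d\<in>D. F a b c d e)"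
proof -
  have "(\<Sum>a\<in>A. \<Sum>b\<in>B. \<Sum>c\<in>C. \<Sum>d\<in>D. \<Sum>e\<in>E. F a b c d e) =
        (\<Sum>a\<in>A. \<Sum>b\<in>B. \<Sum>c\<in>C. \<Sum>e\<in>E. \<Sum>d\<in>D. F a b c d e)"
    by (rule sum.cong[OF refl], rule sum.cong[OF refl], rule sum.cong[OF refl], rule sum.swap)
  also have "\<dots> = (\<Sum>a\<in>A. \<Sum>b\<in>B. \<Sum>e\<in>E. \<Sum>c\<in>C. \<Sum>d\<in>D. F a b c d e)"
    by (rule sum.cong[OF refl], rule sum.cong[OF refl], rule sum.swap)
  also have "\<dots> = (\<Sum>a\<in>A. \<Sum>e\<in>E. \<Sum>b\<in>B. \<Sum>c\<in>C. \<Sum>d\<in>D. F a b c d e)"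
    by (rule sum.cong[OF refl], rule sum.swap)
  also have "\<dots> = (\<Sum>e\<in>E. \<Sum>a\<in>A. \<Sum>b\<in>B. \<Sum>c\<in>C. \<Sum>d\<in>D. F a b c d e)"
    by (rule sum.swap)
  also have "\<dots> = (\<Sum>e\<in>E. \<Sum>a\<in>A. \<Sum>c\<in>C. \<Sum>b\<in>B. \<Sum>d\<in>D. F a b c d e)"
    by (rule sum.cong[OF refl], rule sum.cong[OF refl], rule sum.swap)
  finally show ?thesis .
qed

theorem mainTheorem5:
  fixes f :: "nat \<Rightarrow> real^'d::finite \<Rightarrow> real^'d"
    and m :: nat
    and \<pi> :: "'a forest" and \<pi>' :: "'b forest"
    and \<phi> :: "real^'d \<Rightarrow> real"
  assumes "m \<ge> 1"
    and "\<forall>p \<le> m. \<forall>i. smooth (\<lambda>x. f p x $ i)"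
    and "exotic_forest \<pi>" and "exotic_forest \<pi>'"
    and "smooth_poly \<phi>"
  shows "Fexo f m \<pi> (Fexo f m \<pi>' \<phi>) =
         (\<lambda>x. \<Sum>g \<in> GL_maps \<pi> \<pi>'. Fexo f m (graft \<pi> \<pi>' g) \<phi> x)"
proof
  fix x
  have smf: "\<forall>q \<le> m. \<forall>j. smooth (\<lambda>x. f q x $ j)" using assms(2) by blast
  have sm\<phi>: "smooth \<phi>" using assms(5) unfolding smooth_poly_def by blast
  have finN: "finite (nodes \<pi>)" using assms(3) unfolding exotic_forest_def forest_def by blast
  have finN': "finite (nodes \<pi>')" using assms(4) unfolding exotic_forest_def forest_def by blast
  have "Fexo f m \<pi> (Fexo f m \<pi>' \<phi>) x =
     (\<Sum>i\<in>nodes \<pi> \<rightarrow>\<^sub>E UNIV. \<Sum>p\<in>lianas \<pi> \<rightarrow>\<^sub>E {1..m}.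
        pdm (Fexo f m \<pi>' \<phi>) (image_mset i (mset_set (roots \<pi>))) x * CC f \<pi> i p x)"
    unfolding Fexo_alt[of f m \<pi>] CC_def ..
  also have "\<dots> = (\<Sum>i\<in>nodes \<pi> \<rightarrow>\<^sub>E UNIV. \<Sum>p\<in>lianas \<pi> \<rightarrow>\<^sub>E {1..m}.
        (\<Sum>i'\<in>nodes \<pi>' \<rightarrow>\<^sub>E UNIV. \<Sum>p'\<in>lianas \<pi>' \<rightarrow>\<^sub>E {1..m}. \<Sum>g\<in>roots \<pi> \<rightarrow>\<^sub>E insert None (Some ` nodes \<pi>').
          BR f \<pi>' \<phi> (roots \<pi>) i i' p' g x) * CC f \<pi> i p x)"
    by (simp only: step1[OF smf sm\<phi> finN' finite_roots[OF finN]])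
  also have "\<dots> = (\<Sum>i\<in>nodes \<pi> \<rightarrow>\<^sub>E UNIV. \<Sum>p\<in>lianas \<pi> \<rightarrow>\<^sub>E {1..m}.
        \<Sum>i'\<in>nodes \<pi>' \<rightarrow>\<^sub>E UNIV. \<Sum>p'\<in>lianas \<pi>' \<rightarrow>\<^sub>E {1..m}. \<Sum>g\<in>roots \<pi> \<rightarrow>\<^sub>E insert None (Some ` nodes \<pi>').
          BR f \<pi>' \<phi> (roots \<pi>) i i' p' g x * CC f \<pi> i p x)"
    by (simp only: sum_distrib_right)
  also have "\<dots> = (\<Sum>g\<in>roots \<pi> \<rightarrow>\<^sub>E insert None (Some ` nodes \<pi>'). \<Sum>i\<in>nodes \<pi> \<rightarrow>\<^sub>E UNIV.
        \<Sum>i'\<in>nodes \<pi>' \<rightarrow>\<^sub>E UNIV. \<Sum>p\<in>lianas \<pi> \<rightarrow>\<^sub>E {1..m}. \<Sum>p'\<in>lianas \<pi>' \<rightarrow>\<^sub>E {1..m}.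
          BR f \<pi>' \<phi> (roots \<pi>) i i' p' g x * CC f \<pi> i p x)"
    by (rule reorder5)
  also have "\<dots> = (\<Sum>g \<in> GL_maps \<pi> \<pi>'. Fexo f m (graft \<pi> \<pi>' g) \<phi> x)"
    unfolding GL_maps_def by (simp only: step3[OF finN finN'])
  finally show "Fexo f m \<pi> (Fexo f m \<pi>' \<phi>) x = (\<Sum>g \<in> GL_maps \<pi> \<pi>'. Fexo f m (graft \<pi> \<pi>' g) \<phi> x)" .
qed

end
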